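(* Let $\theta=(\alpha,\beta,\sigma,\tau)$ with $\alpha,\beta\in\mathbb{R}$, $\sigma>0$, $\tau=\gamma\sigma$ for some $\gamma>0$. Let $F$ be a probability measure on $\mathbb{R}$, let $A_0,A_1,\dots,A_N$ be a measurable partition of $\mathbb{R}$, and let $F_N=\sum_{j=1}^N w_j\delta_{z_j}$ be a probability measure with $z_j\in A_j$ for $j=1,\dots,N$. Then \[ \|p_{\theta,F}-p_{\theta,F_N}\|_1\le 2\max_{1\le j\le N}\frac{\left(1+\frac{|\beta|}{\gamma}\right)\operatorname{diam}A_j}{\sigma}+\sum_{j=1}^N|F(A_j)-w_j|+F(A_0). \]
   Context: Errors-in-variables model: for $\theta=(\alpha,\beta,\sigma,\tau)$ and a probability measure $F$ on $\mathbb{R}$, $p_{\theta,F}(x,y)=\int\phi_\sigma(x-z)\,\phi_\tau(y-\alpha-\beta z)\,dF(z)$, where $\phi_s$ is the $N(0,s^2)$ density. $\|\cdot\|_1$ is the $L^1$ norm with respect to Lebesgue measure on $\mathbb{R}^2$. *)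

theory Defs
  imports "HOL-Probability.Probability"
begin

definition phi :: "real \<Rightarrow> real \<Rightarrow> real" where
  "phi s x = normal_density 0 s x"

definition eiv_density ::
  "real \<Rightarrow> real \<Rightarrow> real \<Rightarrow> real \<Rightarrow> real measure \<Rightarrow> real \<times> real \<Rightarrow> real" where
  "eiv_density \<alpha> \<beta> \<sigma> \<tau> F = (\<lambda>(x, y). \<integral>z. phi \<sigma> (x - z) * phi \<tau> (y - \<alpha> - \<beta> * z) \<partial>F)"

definition discrete_mix :: "nat \<Rightarrow> (nat \<Rightarrow> real) \<Rightarrow> (nat \<Rightarrow> real) \<Rightarrow> real measure" where
  "discrete_mix N w z = measure_of UNIV (sets borel)
     (\<lambda>B. \<Sum>j\<in>{1..N}. ennreal (w j) * indicator B (z j))"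

definition diam :: "real set \<Rightarrow> ennreal" where
  "diam A = (SUP p\<in>A \<times> A. ennreal \<bar>fst p - snd p\<bar>)"

end

theory Submission
  imports Defs
begin

lemma nd_deriv:
  fixes s x t :: real assumes "s > 0"
  shows "((\<lambda>t. normal_density 0 s (x - t)) has_real_derivative
          ((x - t) / s^2 * normal_density 0 s (x - t))) (at t within S)"
proof -
  have "((\<lambda>t. exp (- ((x - t)\<^sup>2) / (2 * s\<^sup>2))) has_real_derivative exp (- ((x - t)\<^sup>2) / (2 * s\<^sup>2)) * ((x-t)/s^2)) (at t within S)"
    using assms by (auto intro!: derivative_eq_intros simp: field_simps power2_eq_square)
  then have "((\<lambda>t. 1 / sqrt (2 * pi * s\<^sup>2) * exp (- ((x - t)\<^sup>2) / (2 * s\<^sup>2))) has_real_derivative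
     1 / sqrt (2 * pi * s\<^sup>2) * (exp (- ((x - t)\<^sup>2) / (2 * s\<^sup>2)) * ((x-t)/s^2))) (at t within S)"
    by (rule DERIV_cmult)
  then show ?thesis unfolding normal_density_def by (simp add: mult_ac)
qed

lemma abs_moment:
  fixes s :: real assumes "s > 0"
  shows "(\<integral>\<^sup>+u. ennreal (\<bar>u\<bar> / s^2 * normal_density 0 s u) \<partial>lborel) = ennreal (sqrt (2/pi) / s)"
proof -
  have h: "has_bochner_integral lborel (\<lambda>x. normal_density 0 s x * \<bar>x - 0\<bar>^(2 * 0 + 1)) (2^0 * s^(2 * 0 + 1) * fact 0 * sqrt (2 / pi))"
    using normal_moment_abs_odd assms by blast
  have h2: "has_bochner_integral lborel (\<lambda>u. \<bar>u\<bar> / s^2 * normal_density 0 s u) (sqrt (2/pi) / s)"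
  proof -
    have "has_bochner_integral lborel (\<lambda>u. (1/s^2) * (normal_density 0 s u * \<bar>u - 0\<bar>^(2 * 0 + 1))) ((1/s^2) * (2^0 * s^(2 * 0 + 1) * fact 0 * sqrt (2 / pi)))"
      by (rule has_bochner_integral_mult_right[OF h])
    moreover have "(1/s^2) * (2^0 * s^(2 * 0 + 1) * fact 0 * sqrt (2 / pi)) = sqrt (2/pi) / s"
      using assms by (simp add: power2_eq_square)
    ultimately show ?thesis by (simp add: mult_ac)
  qed
  show ?thesis
    apply (subst nn_integral_eq_integral)
    using h2 apply (auto simp: has_bochner_integral_iff)
    done
qed

lemma shift_le:
  fixes s a b :: real assumes s: "s > 0" and ab: "a \<le> b"
  shows "(\<integral>\<^sup>+x. ennreal \<bar>normal_density 0 s (x - a) - normal_density 0 s (x - b)\<bar> \<partial>lborel)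
         \<le> ennreal ((b - a) / s)"
proof -
  define g where "g x t = (x - t) / s^2 * normal_density 0 s (x - t)" for x t :: real
  have gc: "continuous_on UNIV (\<lambda>p. g (fst p) (snd p))"
    unfolding g_def normal_density_def using s by (intro continuous_intros) auto
  have cont: "continuous_on A (g x)" for x A
    unfolding g_def normal_density_def using s by (intro continuous_intros) auto
  have ftc: "(\<integral>t. indicator {a..b} t *\<^sub>R g x t \<partial>lborel) = normal_density 0 s (x - b) - normal_density 0 s (x - a)" for x
    by (rule integral_FTC_atLeastAtMost[OF ab])
       (use nd_deriv[OF s] cont in \<open>auto simp: g_def has_real_derivative_iff_has_vector_derivative[symmetric]\<close>)
  have int: "integrable lborel (\<lambda>t. indicator {a..b} t *\<^sub>R g x t)" for x
    using borel_integrable_atLeastAtMost'[OF cont[of "{a..b}" x]] unfolding set_integrable_def .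
  have pt: "ennreal \<bar>normal_density 0 s (x - a) - normal_density 0 s (x - b)\<bar>
      \<le> (\<integral>\<^sup>+t. indicator {a..b} t * ennreal \<bar>g x t\<bar> \<partial>lborel)" for x
  proof -
    have "ennreal \<bar>normal_density 0 s (x - a) - normal_density 0 s (x - b)\<bar>
        = ennreal (norm (\<integral>t. indicator {a..b} t *\<^sub>R g x t \<partial>lborel))"
      using ftc[of x] by simp
    also have "\<dots> \<le> (\<integral>\<^sup>+t. norm (indicator {a..b} t *\<^sub>R g x t) \<partial>lborel)"
      by (rule integral_norm_bound_ennreal[OF int])
    also have "\<dots> = (\<integral>\<^sup>+t. indicator {a..b} t * ennreal \<bar>g x t\<bar> \<partial>lborel)"
      by (intro nn_integral_cong) (auto simp: indicator_def)
    finally show ?thesis .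
  qed
  have "(\<integral>\<^sup>+x. ennreal \<bar>normal_density 0 s (x - a) - normal_density 0 s (x - b)\<bar> \<partial>lborel)
      \<le> (\<integral>\<^sup>+x. (\<integral>\<^sup>+t. indicator {a..b} t * ennreal \<bar>g x t\<bar> \<partial>lborel) \<partial>lborel)"
    by (intro nn_integral_mono pt)
  also have "\<dots> = (\<integral>\<^sup>+t. (\<integral>\<^sup>+x. indicator {a..b} t * ennreal \<bar>g x t\<bar> \<partial>lborel) \<partial>lborel)"
  proof (rule pair_sigma_finite.Fubini'[symmetric])
    show "pair_sigma_finite lborel lborel"
      by (auto simp: pair_sigma_finite_def lborel.sigma_finite_measure_axioms)
    have "(\<lambda>p. ennreal (indicator {a..b} (snd p) * \<bar>g (fst p) (snd p)\<bar>)) \<in> borel_measurable borel"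
    proof -
      have "(\<lambda>p::real\<times>real. indicator {a..b} (snd p) :: real) \<in> borel_measurable borel"
        by (rule measurable_compose[OF borel_measurable_continuous_onI borel_measurable_indicator])
           (auto intro: continuous_intros)
      then show ?thesis
        by (intro measurable_compose[OF _ measurable_ennreal] borel_measurable_times borel_measurable_abs
          borel_measurable_continuous_onI[OF gc])
    qed
    then show "(\<lambda>(x, t). indicator {a..b} t * ennreal \<bar>g x t\<bar>) \<in> borel_measurable (lborel \<Otimes>\<^sub>M lborel)"
      unfolding lborel_prod measurable_lborel2
      by (rule measurable_cong[THEN iffD1, rotated]) (auto simp: indicator_def)
  qed
  also have "\<dots> = (\<integral>\<^sup>+t. indicator {a..b} t * ennreal (sqrt (2/pi) / s) \<partial>lborel)"
  proof (intro nn_integral_cong)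
    fix t :: real
    have gtm: "(\<lambda>x. ennreal \<bar>g x t\<bar>) \<in> borel_measurable borel"
      by (intro measurable_compose[OF _ measurable_ennreal] borel_measurable_abs
          borel_measurable_continuous_onI)
         (use s in \<open>auto simp: g_def normal_density_def intro!: continuous_intros\<close>)
    have "(\<integral>\<^sup>+x. ennreal \<bar>g x t\<bar> \<partial>lborel) = (\<integral>\<^sup>+x. ennreal \<bar>g (t + 1 * x) t\<bar> \<partial>lborel)"
      using nn_integral_real_affine[OF gtm, of 1 t] by simp
    also have "\<dots> = (\<integral>\<^sup>+u. ennreal (\<bar>u\<bar> / s^2 * normal_density 0 s u) \<partial>lborel)"
      by (intro nn_integral_cong) (simp add: g_def abs_mult)
    also have "\<dots> = ennreal (sqrt (2/pi) / s)" by (rule abs_moment[OF s])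
    finally show "(\<integral>\<^sup>+x. indicator {a..b} t * ennreal \<bar>g x t\<bar> \<partial>lborel) = indicator {a..b} t * ennreal (sqrt (2/pi) / s)"
      by (subst nn_integral_cmult) (use gtm in auto)
  qed
  also have "\<dots> = ennreal (sqrt (2/pi) / s) * ennreal (b - a)"
    using ab by (subst mult.commute) (simp add: nn_integral_cmult_indicator)
  also have "\<dots> \<le> ennreal ((b - a) / s)"
  proof -
    have q: "sqrt (2/pi) \<le> 1" using pi_gt3 by simp
    have "sqrt (2/pi) * ((b - a) / s) \<le> 1 * ((b - a) / s)"
      by (rule mult_right_mono[OF q]) (use s ab in simp)
    then have "sqrt (2/pi) / s * (b - a) \<le> (b - a) / s"
      by simp
    then show ?thesis using ab s by (simp add: ennreal_mult''[symmetric] ennreal_leI)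
  qed
  finally show ?thesis .
qed

lemma shift_abs:
  fixes s a b :: real assumes s: "s > 0"
  shows "(\<integral>\<^sup>+x. ennreal \<bar>normal_density 0 s (x - a) - normal_density 0 s (x - b)\<bar> \<partial>lborel)
         \<le> ennreal (\<bar>a - b\<bar> / s)"
proof (cases "a \<le> b")
  case True
  then show ?thesis using shift_le[OF s True] by simp
next
  case False
  then have "b \<le> a" by simp
  from shift_le[OF s this] show ?thesis using False
    by (simp add: abs_minus_commute)
qed

lemma meas_pair:
  assumes "sets M = sets borel" "sets F = sets (borel :: 'b::second_countable_topology measure)"
    and "h \<in> borel_measurable (borel :: ('a::second_countable_topology \<times> 'b) measure)"
  shows "h \<in> borel_measurable (M \<Otimes>\<^sub>M F)"
proof -
  have "sets (M \<Otimes>\<^sub>M F) = sets (borel \<Otimes>\<^sub>M borel)"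
    by (rule sets_pair_measure_cong) (use assms in auto)
  then have X: "sets (M \<Otimes>\<^sub>M F) = sets (borel :: ('a \<times> 'b) measure)" by (simp add: arg_cong[where f=sets, OF borel_prod])
  show ?thesis by (subst measurable_cong_sets[OF X refl]) (rule assms(3))
qed

lemma fst_borel[measurable]: "fst \<in> measurable (borel :: (real \<times> real) measure) borel"
  by (intro borel_measurable_continuous_onI continuous_intros)
lemma snd_borel[measurable]: "snd \<in> measurable (borel :: (real \<times> real) measure) borel"
  by (intro borel_measurable_continuous_onI continuous_intros)

lemma prod_int:
  fixes f g :: "real \<Rightarrow> ennreal"
  assumes [measurable]: "f \<in> borel_measurable borel" "g \<in> borel_measurable borel"
  shows "(\<integral>\<^sup>+p. f (fst p) * g (snd p) \<partial>lborel) = (\<integral>\<^sup>+x. f x \<partial>lborel) * (\<integral>\<^sup>+y. g y \<partial>lborel)"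
proof -
  have "(\<integral>\<^sup>+p. f (fst p) * g (snd p) \<partial>lborel) = (\<integral>\<^sup>+p. f (fst p) * g (snd p) \<partial>(lborel \<Otimes>\<^sub>M lborel))"
    by (simp add: lborel_prod)
  also have "\<dots> = (\<integral>\<^sup>+x. \<integral>\<^sup>+y. f x * g y \<partial>lborel \<partial>lborel)"
    by (subst lborel.nn_integral_fst[symmetric]) auto
  also have "\<dots> = (\<integral>\<^sup>+x. f x * (\<integral>\<^sup>+y. g y \<partial>lborel) \<partial>lborel)"
    by (intro nn_integral_cong nn_integral_cmult) auto
  also have "\<dots> = (\<integral>\<^sup>+x. f x \<partial>lborel) * (\<integral>\<^sup>+y. g y \<partial>lborel)"
    by (rule nn_integral_multc) auto
  finally show ?thesis .
qed

lemma nd_int: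
  fixes s c :: real assumes "s > 0"
  shows "(\<integral>\<^sup>+x. ennreal (normal_density 0 s (x - c)) \<partial>lborel) = 1"
proof -
  have "(\<integral>\<^sup>+x. ennreal (normal_density 0 s (x - c)) \<partial>lborel) = (\<integral>\<^sup>+x. ennreal (normal_density c s x) \<partial>lborel)"
    by (simp add: normal_density_def)
  also have "\<dots> = 1"
    by (subst nn_integral_eq_integral) (use assms in auto)
  finally show ?thesis .
qed

definition kk :: "real \<Rightarrow> real \<Rightarrow> real \<Rightarrow> real \<Rightarrow> real \<Rightarrow> real \<times> real \<Rightarrow> real" where
  "kk \<alpha> \<beta> \<sigma> \<tau> z p = phi \<sigma> (fst p - z) * phi \<tau> (snd p - \<alpha> - \<beta> * z)"

lemma kk_nonneg: "0 \<le> kk \<alpha> \<beta> \<sigma> \<tau> z p"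
  by (simp add: kk_def phi_def)

lemma kk_int:
  assumes "\<sigma> > 0" "\<tau> > 0"
  shows "(\<integral>\<^sup>+p. ennreal (kk \<alpha> \<beta> \<sigma> \<tau> z p) \<partial>lborel) = 1"
proof -
  have "(\<integral>\<^sup>+p. ennreal (kk \<alpha> \<beta> \<sigma> \<tau> z p) \<partial>lborel)
     = (\<integral>\<^sup>+p. ennreal (normal_density 0 \<sigma> (fst p - z)) * ennreal (normal_density 0 \<tau> (snd p - (\<alpha> + \<beta> * z))) \<partial>lborel)"
    by (intro nn_integral_cong) (simp add: kk_def phi_def ennreal_mult' diff_diff_eq)
  also have "\<dots> = 1"
    by (subst prod_int) (auto simp: nd_int assms)
  finally show ?thesis .
qed

lemma kk_diff:
  assumes s: "\<sigma> > 0" and t: "\<tau> > 0"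
  shows "(\<integral>\<^sup>+p. ennreal \<bar>kk \<alpha> \<beta> \<sigma> \<tau> z p - kk \<alpha> \<beta> \<sigma> \<tau> z' p\<bar> \<partial>lborel)
     \<le> ennreal (\<bar>z - z'\<bar> / \<sigma> + \<bar>\<beta>\<bar> * \<bar>z - z'\<bar> / \<tau>)"
proof -
  define A where "A c x = normal_density 0 \<sigma> (x - c)" for c x
  define B where "B c y = normal_density 0 \<tau> (y - c)" for c y
  have [measurable]: "A c \<in> borel_measurable borel" "B c \<in> borel_measurable borel" for c
    unfolding A_def B_def by auto
  have pt: "ennreal \<bar>kk \<alpha> \<beta> \<sigma> \<tau> z p - kk \<alpha> \<beta> \<sigma> \<tau> z' p\<bar>
      \<le> ennreal \<bar>A z (fst p) - A z' (fst p)\<bar> * ennreal (B (\<alpha> + \<beta> * z) (snd p))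
       + ennreal (A z' (fst p)) * ennreal \<bar>B (\<alpha> + \<beta> * z) (snd p) - B (\<alpha> + \<beta> * z') (snd p)\<bar>" for p
  proof -
    let ?a1 = "A z (fst p)" and ?a2 = "A z' (fst p)" and ?b1 = "B (\<alpha> + \<beta> * z) (snd p)" and ?b2 = "B (\<alpha> + \<beta> * z') (snd p)"
    have kk: "kk \<alpha> \<beta> \<sigma> \<tau> z p = ?a1 * ?b1" "kk \<alpha> \<beta> \<sigma> \<tau> z' p = ?a2 * ?b2"
      by (simp_all add: kk_def A_def B_def phi_def diff_diff_eq)
    have nn: "0 \<le> ?a2" "0 \<le> ?b1" by (simp_all add: A_def B_def)
    have "\<bar>?a1 * ?b1 - ?a2 * ?b2\<bar> = \<bar>(?a1 - ?a2) * ?b1 + ?a2 * (?b1 - ?b2)\<bar>"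
      by (simp add: algebra_simps)
    also have "\<dots> \<le> \<bar>?a1 - ?a2\<bar> * ?b1 + ?a2 * \<bar>?b1 - ?b2\<bar>"
      using nn by (metis abs_mult abs_of_nonneg abs_triangle_ineq)
    finally show ?thesis using nn
      by (simp add: kk ennreal_mult'[symmetric] ennreal_plus[symmetric] del: ennreal_plus ennreal_leI)
  qed
  have "(\<integral>\<^sup>+p. ennreal \<bar>kk \<alpha> \<beta> \<sigma> \<tau> z p - kk \<alpha> \<beta> \<sigma> \<tau> z' p\<bar> \<partial>lborel)
     \<le> (\<integral>\<^sup>+p. ennreal \<bar>A z (fst p) - A z' (fst p)\<bar> * ennreal (B (\<alpha> + \<beta> * z) (snd p))
       + ennreal (A z' (fst p)) * ennreal \<bar>B (\<alpha> + \<beta> * z) (snd p) - B (\<alpha> + \<beta> * z') (snd p)\<bar> \<partial>lborel)"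
    by (intro nn_integral_mono pt)
  also have "\<dots> = (\<integral>\<^sup>+p. ennreal \<bar>A z (fst p) - A z' (fst p)\<bar> * ennreal (B (\<alpha> + \<beta> * z) (snd p)) \<partial>lborel)
      + (\<integral>\<^sup>+p. ennreal (A z' (fst p)) * ennreal \<bar>B (\<alpha> + \<beta> * z) (snd p) - B (\<alpha> + \<beta> * z') (snd p)\<bar> \<partial>lborel)"
    by (rule nn_integral_add) auto
  also have "\<dots> = (\<integral>\<^sup>+x. ennreal \<bar>A z x - A z' x\<bar> \<partial>lborel) * (\<integral>\<^sup>+y. ennreal (B (\<alpha> + \<beta> * z) y) \<partial>lborel)
      + (\<integral>\<^sup>+x. ennreal (A z' x) \<partial>lborel) * (\<integral>\<^sup>+y. ennreal \<bar>B (\<alpha> + \<beta> * z) y - B (\<alpha> + \<beta> * z') y\<bar> \<partial>lborel)"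
    by (intro arg_cong2[where f="(+)"] prod_int) auto
  also have "\<dots> = (\<integral>\<^sup>+x. ennreal \<bar>A z x - A z' x\<bar> \<partial>lborel)
      + (\<integral>\<^sup>+y. ennreal \<bar>B (\<alpha> + \<beta> * z) y - B (\<alpha> + \<beta> * z') y\<bar> \<partial>lborel)"
    by (simp add: A_def B_def nd_int s t)
  also have "\<dots> \<le> ennreal (\<bar>z - z'\<bar> / \<sigma>) + ennreal (\<bar>(\<alpha> + \<beta> * z) - (\<alpha> + \<beta> * z')\<bar> / \<tau>)"
    unfolding A_def B_def by (intro add_mono shift_abs s t)
  also have "\<dots> = ennreal (\<bar>z - z'\<bar> / \<sigma> + \<bar>\<beta>\<bar> * \<bar>z - z'\<bar> / \<tau>)"
    using s t by (simp add: ennreal_plus[symmetric] abs_mult[symmetric] right_diff_distrib del: ennreal_plus)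
  finally show ?thesis .
qed

lemma dm_eq:
  assumes w: "\<And>j. j \<in> {1..N} \<Longrightarrow> w j \<ge> 0"
  shows "discrete_mix N w z = distr (density (count_space {1..N}) (\<lambda>j. ennreal (w j))) borel z"
proof -
  let ?M = "distr (density (count_space {1..N}) (\<lambda>j. ennreal (w j))) borel z"
  have sp: "space ?M = UNIV" "sets ?M = sets borel" by auto
  have "?M = measure_of UNIV (sets borel) (emeasure ?M)"
    using measure_of_of_measure[of ?M] sp by simp
  also have "\<dots> = discrete_mix N w z" unfolding discrete_mix_def
  proof (rule measure_of_eq)
    show "sets borel \<subseteq> Pow UNIV" by auto
    fix a :: "real set" assume "a \<in> sigma_sets UNIV (sets borel)"
    then have a: "a \<in> sets borel" using sets.sigma_sets_eq[of borel, unfolded space_borel] by blast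
    have "emeasure ?M a = (\<Sum>j\<in>{1..N}. ennreal (w j) * indicator (z -` a \<inter> {1..N}) j)"
      using a by (simp add: emeasure_distr emeasure_density nn_integral_count_space_finite)
    also have "\<dots> = (\<Sum>j\<in>{1..N}. ennreal (w j) * indicator a (z j))"
      by (intro sum.cong refl) (auto simp: indicator_def)
    finally show "emeasure ?M a = (\<Sum>j\<in>{1..N}. ennreal (w j) * indicator a (z j))" .
  qed
  finally show ?thesis by simp
qed

lemma dm_sets: "sets (discrete_mix N w z) = sets borel"
  unfolding discrete_mix_def using sets.sigma_sets_eq[of borel, unfolded space_borel] by (simp add: sets_measure_of_conv)

lemma dm_integral:
  fixes f :: "real \<Rightarrow> real"
  assumes w: "\<And>j. j \<in> {1..N} \<Longrightarrow> w j \<ge> 0" and f: "f \<in> borel_measurable borel"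
  shows "integral\<^sup>L (discrete_mix N w z) f = (\<Sum>j\<in>{1..N}. w j * f (z j))"
proof -
  have eq: "discrete_mix N w z = distr (density (count_space {1..N}) (\<lambda>j. ennreal (w j))) borel z"
    by (rule dm_eq[OF w])
  have "integral\<^sup>L (discrete_mix N w z) f = integral\<^sup>L (density (count_space {1..N}) (\<lambda>j. ennreal (w j))) (\<lambda>j. f (z j))"
    unfolding eq by (rule integral_distr) (use f in auto)
  also have "\<dots> = integral\<^sup>L (count_space {1..N}) (\<lambda>j. w j *\<^sub>R f (z j))"
    by (rule integral_density) (use w in \<open>auto simp: AE_count_space\<close>)
  also have "\<dots> = (\<Sum>j\<in>{1..N}. w j * f (z j))"
    by (simp add: lebesgue_integral_count_space_finite)
  finally show ?thesis .
qed

lemma kk_meas_z: "(\<lambda>z. kk \<alpha> \<beta> \<sigma> \<tau> z p) \<in> borel_measurable borel"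
  unfolding kk_def phi_def by measurable

lemma fst_borelg[measurable]: "fst \<in> measurable (borel :: ('a::second_countable_topology \<times> 'b::second_countable_topology) measure) borel"
  by (intro borel_measurable_continuous_onI continuous_intros)
lemma snd_borelg[measurable]: "snd \<in> measurable (borel :: ('a::second_countable_topology \<times> 'b::second_countable_topology) measure) borel"
  by (intro borel_measurable_continuous_onI continuous_intros)

lemma kk_meas_p: "(\<lambda>p. kk \<alpha> \<beta> \<sigma> \<tau> z p) \<in> borel_measurable borel"
  unfolding kk_def phi_def by measurable

lemma kk_meas_pz: "(\<lambda>q::(real \<times> real) \<times> real. kk \<alpha> \<beta> \<sigma> \<tau> (snd q) (fst q)) \<in> borel_measurable borel"
  unfolding kk_def phi_def by measurable

lemma nd_le: "normal_density m s x \<le> 1 / sqrt (2 * pi * s\<^sup>2)"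
proof -
  have "exp (- (x - m)\<^sup>2 / (2 * s\<^sup>2)) \<le> 1"
    by (simp add: divide_nonpos_nonneg)
  then show ?thesis unfolding normal_density_def
    by (intro mult_left_le) auto
qed

lemma kk_le: "kk \<alpha> \<beta> \<sigma> \<tau> z p \<le> 1 / sqrt (2 * pi * \<sigma>\<^sup>2) * (1 / sqrt (2 * pi * \<tau>\<^sup>2))"
  unfolding kk_def phi_def
  by (intro mult_mono nd_le) auto

theorem mainTheorem11:
  fixes \<alpha> \<beta> \<sigma> \<tau> \<gamma> :: real
    and F :: "real measure"
    and N :: nat
    and A :: "nat \<Rightarrow> real set"
    and w z :: "nat \<Rightarrow> real"
  assumes "\<sigma> > 0" and "\<gamma> > 0" and "\<tau> = \<gamma> * \<sigma>"
    and "prob_space F" and "sets F = sets borel"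
    and "\<And>j. j \<le> N \<Longrightarrow> A j \<in> sets borel"
    and "disjoint_family_on A {0..N}"
    and "(\<Union>j\<in>{0..N}. A j) = UNIV"
    and "\<And>j. j \<in> {1..N} \<Longrightarrow> w j \<ge> 0"
    and "(\<Sum>j\<in>{1..N}. w j) = 1"
    and "\<And>j. j \<in> {1..N} \<Longrightarrow> z j \<in> A j"
  shows "(\<integral>\<^sup>+ p. ennreal \<bar>eiv_density \<alpha> \<beta> \<sigma> \<tau> F p
              - eiv_density \<alpha> \<beta> \<sigma> \<tau> (discrete_mix N w z) p\<bar> \<partial>lborel)
         \<le> 2 * (MAX j\<in>{1..N}. ennreal ((1 + \<bar>\<beta>\<bar> / \<gamma>) / \<sigma>) * diam (A j))
           + ennreal ((\<Sum>j\<in>{1..N}. \<bar>measure F (A j) - w j\<bar>) + measure F (A 0))"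
proof -
  note sF = assms(5)
  have spF: "space F = UNIV" using sets_eq_imp_space_eq[OF sF] by simp
  interpret F: prob_space F by fact
  have s: "\<sigma> > 0" and tau: "\<tau> > 0" using assms(1-3) by auto
  define k where "k z p = kk \<alpha> \<beta> \<sigma> \<tau> z p" for z p
  define C where "C = ennreal ((1 + \<bar>\<beta>\<bar> / \<gamma>) / \<sigma>)"
  define mF where "mF j = measure F (A j)" for j
  define Kb where "Kb = 1 / sqrt (2 * pi * \<sigma>\<^sup>2) * (1 / sqrt (2 * pi * \<tau>\<^sup>2))"
  define MX where "MX = (MAX j\<in>{1..N}. C * diam (A j))"
  have k0: "0 \<le> k z p" for z p by (simp add: k_def kk_nonneg)
  have kb: "k z p \<le> Kb" for z p unfolding k_def Kb_def by (rule kk_le)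
  have Kb0: "0 \<le> Kb" using k0 kb order_trans by blast
  have AF[measurable]: "A j \<in> sets F" if "j \<le> N" for j using assms(6)[OF that] sF by simp
  have kF[measurable]: "(\<lambda>z. k z p) \<in> borel_measurable F" for p
    using kk_meas_z unfolding k_def measurable_cong_sets[OF sF refl] .
  have intb: "integrable F f" if "f \<in> borel_measurable F" "\<And>z. \<bar>f z\<bar> \<le> B" for f :: "real \<Rightarrow> real" and B :: real
    using that by (intro F.integrable_const_bound[where B=B]) auto
  have part: "(\<Sum>j\<in>{0..N}. indicator (A j) x) = (1::real)" for x
  proof -
    obtain j0 where j0: "j0 \<in> {0..N}" "x \<in> A j0" using assms(8) by blast
    have "(\<Sum>j\<in>{0..N}. indicator (A j) x) = (\<Sum>j\<in>{0..N}. if j = j0 then 1 else (0::real))"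
    proof (intro sum.cong refl)
      fix j assume j: "j \<in> {0..N}"
      show "indicator (A j) x = (if j = j0 then 1 else (0::real))"
      proof (cases "j = j0")
        case False
        then have "A j \<inter> A j0 = {}" using assms(7) j j0(1) unfolding disjoint_family_on_def by blast
        then show ?thesis using False j0(2) by (auto simp: indicator_def)
      qed (use j0 in auto)
    qed
    also have "\<dots> = 1" using j0(1) by simp
    finally show ?thesis .
  qed
  have pF: "eiv_density \<alpha> \<beta> \<sigma> \<tau> F p = (\<integral>z'. k z' p \<partial>F)" for p
    by (cases p) (simp add: eiv_density_def k_def kk_def)
  have pN: "eiv_density \<alpha> \<beta> \<sigma> \<tau> (discrete_mix N w z) p = (\<Sum>j\<in>{1..N}. w j * k (z j) p)" for p
  proof -
    have "eiv_density \<alpha> \<beta> \<sigma> \<tau> (discrete_mix N w z) p = (\<integral>z'. kk \<alpha> \<beta> \<sigma> \<tau> z' p \<partial>discrete_mix N w z)"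
      by (cases p) (simp add: eiv_density_def kk_def)
    also have "\<dots> = (\<Sum>j\<in>{1..N}. w j * k (z j) p)"
      by (subst dm_integral[OF assms(9) kk_meas_z]) (simp_all add: k_def)
    finally show ?thesis .
  qed
  define T0 where "T0 p = (\<integral>\<^sup>+z'. indicator (A 0) z' * ennreal (k z' p) \<partial>F)" for p
  define T1 where "T1 j p = (\<integral>\<^sup>+z'. indicator (A j) z' * ennreal \<bar>k z' p - k (z j) p\<bar> \<partial>F)" for j p
  define T2 where "T2 j p = ennreal (\<bar>mF j - w j\<bar> * k (z j) p)" for j p
  have pt: "ennreal \<bar>eiv_density \<alpha> \<beta> \<sigma> \<tau> F p - eiv_density \<alpha> \<beta> \<sigma> \<tau> (discrete_mix N w z) p\<bar>
      \<le> T0 p + (\<Sum>j\<in>{1..N}. T1 j p + T2 j p)" for p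
  proof -
    define I where "I j = (\<integral>z'. indicator (A j) z' * k z' p \<partial>F)" for j
    define J where "J j = (\<integral>z'. indicator (A j) z' * (k z' p - k (z j) p) \<partial>F)" for j
    have int1: "integrable F (\<lambda>z'. indicator (A j) z' * k z' p)" if "j \<le> N" for j
      by (rule intb[of _ Kb]) (use that k0 kb Kb0 in \<open>auto simp: indicator_def\<close>)
    have int2: "integrable F (\<lambda>z'. indicator (A j) z' * (k z' p - k (z j) p))" if "j \<le> N" for j
    proof (rule intb[of _ "2 * Kb"])
      show "(\<lambda>z'. indicator (A j) z' * (k z' p - k (z j) p)) \<in> borel_measurable F"
        using that by measurable
      fix x
      have "\<bar>k x p - k (z j) p\<bar> \<le> 2 * Kb" using k0[of x p] kb[of x p] k0[of "z j" p] kb[of "z j" p] by linarith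
      then show "\<bar>indicator (A j) x * (k x p - k (z j) p)\<bar> \<le> 2 * Kb" using Kb0 by (auto simp: indicator_def)
    qed
    have int3: "integrable F (\<lambda>z'. indicator (A j) z' * k (z j) p)" if "j \<le> N" for j
      by (rule intb[of _ Kb]) (use that k0 kb Kb0 in \<open>auto simp: indicator_def\<close>)
    have "(\<integral>z'. k z' p \<partial>F) = (\<integral>z'. (\<Sum>j\<in>{0..N}. indicator (A j) z' * k z' p) \<partial>F)"
      by (intro Bochner_Integration.integral_cong refl) (simp add: sum_distrib_right[symmetric] part)
    also have "\<dots> = (\<Sum>j\<in>{0..N}. I j)"
      unfolding I_def by (rule Bochner_Integration.integral_sum[where I="{0..N}" and M=F and f="\<lambda>j z'. indicator (A j) z' * k z' p"]) (use int1 in auto)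
    also have "\<dots> = I 0 + (\<Sum>j\<in>{1..N}. I j)"
    proof -
      have "{0..N} = insert 0 {1..N}" by auto
      then show ?thesis by simp
    qed
    finally have e1: "(\<integral>z'. k z' p \<partial>F) = I 0 + (\<Sum>j\<in>{1..N}. I j)" .
    have e2: "I j = J j + mF j * k (z j) p" if "j \<in> {1..N}" for j
    proof -
      have jN: "j \<le> N" using that by simp
      have "I j = (\<integral>z'. indicator (A j) z' * (k z' p - k (z j) p) + indicator (A j) z' * k (z j) p \<partial>F)"
        unfolding I_def by (intro Bochner_Integration.integral_cong refl) (simp add: algebra_simps)
      also have "\<dots> = J j + (\<integral>z'. indicator (A j) z' * k (z j) p \<partial>F)"
        unfolding J_def by (rule Bochner_Integration.integral_add[OF int2[OF jN] int3[OF jN]])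
      also have "(\<integral>z'. indicator (A j) z' * k (z j) p \<partial>F) = mF j * k (z j) p"
        by (simp add: mF_def spF)
      finally show ?thesis .
    qed
    have diff: "eiv_density \<alpha> \<beta> \<sigma> \<tau> F p - eiv_density \<alpha> \<beta> \<sigma> \<tau> (discrete_mix N w z) p
        = I 0 + (\<Sum>j\<in>{1..N}. J j + (mF j - w j) * k (z j) p)"
    proof -
      have s1: "(\<Sum>j\<in>{1..N}. I j) = (\<Sum>j\<in>{1..N}. J j + mF j * k (z j) p)"
        by (rule sum.cong[OF refl]) (rule e2)
      have s2: "(\<Sum>j\<in>{1..N}. J j + (mF j - w j) * k (z j) p)
          = (\<Sum>j\<in>{1..N}. J j + mF j * k (z j) p) - (\<Sum>j\<in>{1..N}. w j * k (z j) p)"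
        unfolding sum_subtractf[symmetric] by (rule sum.cong[OF refl]) (simp add: left_diff_distrib)
      show ?thesis unfolding pF pN e1 s1 s2 by simp
    qed
    have "\<bar>I 0 + (\<Sum>j\<in>{1..N}. J j + (mF j - w j) * k (z j) p)\<bar>
        \<le> \<bar>I 0\<bar> + (\<Sum>j\<in>{1..N}. \<bar>J j\<bar> + \<bar>mF j - w j\<bar> * k (z j) p)"
    proof -
      have "\<bar>(\<Sum>j\<in>{1..N}. J j + (mF j - w j) * k (z j) p)\<bar> \<le> (\<Sum>j\<in>{1..N}. \<bar>J j + (mF j - w j) * k (z j) p\<bar>)"
        by (rule sum_abs)
      also have "\<dots> \<le> (\<Sum>j\<in>{1..N}. \<bar>J j\<bar> + \<bar>mF j - w j\<bar> * k (z j) p)"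
        by (intro sum_mono) (metis abs_mult abs_of_nonneg abs_triangle_ineq k0)
      finally have "\<bar>(\<Sum>j\<in>{1..N}. J j + (mF j - w j) * k (z j) p)\<bar> \<le> (\<Sum>j\<in>{1..N}. \<bar>J j\<bar> + \<bar>mF j - w j\<bar> * k (z j) p)" .
      then show ?thesis using abs_triangle_ineq[of "I 0" "(\<Sum>j\<in>{1..N}. J j + (mF j - w j) * k (z j) p)"] by linarith
    qed
    then have "ennreal \<bar>eiv_density \<alpha> \<beta> \<sigma> \<tau> F p - eiv_density \<alpha> \<beta> \<sigma> \<tau> (discrete_mix N w z) p\<bar>
        \<le> ennreal (\<bar>I 0\<bar> + (\<Sum>j\<in>{1..N}. \<bar>J j\<bar> + \<bar>mF j - w j\<bar> * k (z j) p))"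
      unfolding diff by (rule ennreal_leI)
    also have "\<dots> = ennreal \<bar>I 0\<bar> + (\<Sum>j\<in>{1..N}. ennreal \<bar>J j\<bar> + T2 j p)"
    proof -
      have nn: "0 \<le> \<bar>J j\<bar> + \<bar>mF j - w j\<bar> * k (z j) p" for j using k0[of "z j" p] by simp
      have "ennreal (\<bar>I 0\<bar> + (\<Sum>j\<in>{1..N}. \<bar>J j\<bar> + \<bar>mF j - w j\<bar> * k (z j) p))
          = ennreal \<bar>I 0\<bar> + ennreal (\<Sum>j\<in>{1..N}. \<bar>J j\<bar> + \<bar>mF j - w j\<bar> * k (z j) p)"
        by (rule ennreal_plus) (auto intro: sum_nonneg nn)
      also have "ennreal (\<Sum>j\<in>{1..N}. \<bar>J j\<bar> + \<bar>mF j - w j\<bar> * k (z j) p)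
          = (\<Sum>j\<in>{1..N}. ennreal (\<bar>J j\<bar> + \<bar>mF j - w j\<bar> * k (z j) p))"
        by (rule sum_ennreal[symmetric]) (rule nn)
      also have "\<dots> = (\<Sum>j\<in>{1..N}. ennreal \<bar>J j\<bar> + T2 j p)"
      proof (rule sum.cong[OF refl])
        fix j show "ennreal (\<bar>J j\<bar> + \<bar>mF j - w j\<bar> * k (z j) p) = ennreal \<bar>J j\<bar> + T2 j p"
          unfolding T2_def by (rule ennreal_plus) (use k0[of "z j" p] in auto)
      qed
      finally show ?thesis .
    qed
    also have "\<dots> \<le> T0 p + (\<Sum>j\<in>{1..N}. T1 j p + T2 j p)"
    proof (intro add_mono sum_mono order_refl)
      have "ennreal \<bar>I 0\<bar> = ennreal (norm (I 0))" by simp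
      also have "\<dots> \<le> (\<integral>\<^sup>+z'. norm (indicator (A 0) z' * k z' p) \<partial>F)"
        unfolding I_def by (rule integral_norm_bound_ennreal[OF int1]) simp
      also have "\<dots> = T0 p"
        unfolding T0_def by (intro nn_integral_cong) (auto simp: indicator_def k0)
      finally show "ennreal \<bar>I 0\<bar> \<le> T0 p" .
    next
      fix j assume j: "j \<in> {1..N}"
      have "ennreal \<bar>J j\<bar> = ennreal (norm (J j))" by simp
      also have "\<dots> \<le> (\<integral>\<^sup>+z'. norm (indicator (A j) z' * (k z' p - k (z j) p)) \<partial>F)"
        unfolding J_def by (rule integral_norm_bound_ennreal[OF int2]) (use j in simp)
      also have "\<dots> = T1 j p"
        unfolding T1_def by (intro nn_integral_cong) (auto simp: indicator_def)
      finally show "ennreal \<bar>J j\<bar> \<le> T1 j p" .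
    qed
    finally show ?thesis .
  qed

  have AF0: "A 0 \<in> sets F" using AF by simp
  have mA: "(\<lambda>q::(real \<times> real) \<times> real. indicator (A j) (snd q) :: ennreal) \<in> borel_measurable (lborel \<Otimes>\<^sub>M F)"
    if "j \<le> N" for j
    by (rule measurable_compose[OF measurable_snd]) (use AF[OF that] in simp)
  have mK: "(\<lambda>q::(real \<times> real) \<times> real. ennreal (k (snd q) (fst q))) \<in> borel_measurable (lborel \<Otimes>\<^sub>M F)"
    unfolding k_def by (rule meas_pair[OF sets_lborel sF]) (rule measurable_compose[OF kk_meas_pz measurable_ennreal])
  have mD: "(\<lambda>q::(real \<times> real) \<times> real. ennreal \<bar>k (snd q) (fst q) - k (z j) (fst q)\<bar>) \<in> borel_measurable (lborel \<Otimes>\<^sub>M F)" for j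
  proof -
    have "(\<lambda>q::(real \<times> real) \<times> real. kk \<alpha> \<beta> \<sigma> \<tau> (z j) (fst q)) \<in> borel_measurable borel"
      by (rule measurable_compose[OF fst_borelg kk_meas_p])
    then have "(\<lambda>q::(real \<times> real) \<times> real. ennreal \<bar>kk \<alpha> \<beta> \<sigma> \<tau> (snd q) (fst q) - kk \<alpha> \<beta> \<sigma> \<tau> (z j) (fst q)\<bar>) \<in> borel_measurable borel"
      by (intro measurable_compose[OF _ measurable_ennreal] borel_measurable_abs borel_measurable_diff kk_meas_pz)
    then show ?thesis unfolding k_def by (rule meas_pair[OF sets_lborel sF])
  qed
  have sfin: "pair_sigma_finite lborel F"
    by (auto simp: pair_sigma_finite_def lborel.sigma_finite_measure_axioms F.sigma_finite_measure_axioms)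
  have fub: "(\<integral>\<^sup>+p. (\<integral>\<^sup>+z'. f p z' \<partial>F) \<partial>lborel) = (\<integral>\<^sup>+z'. (\<integral>\<^sup>+p. f p z' \<partial>lborel) \<partial>F)"
    if "(\<lambda>q. f (fst q) (snd q)) \<in> borel_measurable (lborel \<Otimes>\<^sub>M F)" for f :: "real \<times> real \<Rightarrow> real \<Rightarrow> ennreal"
    by (rule pair_sigma_finite.Fubini'[OF sfin, symmetric]) (use that in \<open>simp add: case_prod_unfold\<close>)
  have mint: "(\<lambda>p. \<integral>\<^sup>+z'. f p z' \<partial>F) \<in> borel_measurable lborel"
    if "(\<lambda>q. f (fst q) (snd q)) \<in> borel_measurable (lborel \<Otimes>\<^sub>M F)" for f :: "real \<times> real \<Rightarrow> real \<Rightarrow> ennreal"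
    by (rule F.borel_measurable_nn_integral) (use that in \<open>simp add: case_prod_unfold\<close>)
  have m0: "(\<lambda>q::(real \<times> real) \<times> real. indicator (A 0) (snd q) * ennreal (k (snd q) (fst q))) \<in> borel_measurable (lborel \<Otimes>\<^sub>M F)"
    by (intro borel_measurable_times_ennreal mA mK) simp
  have m1: "(\<lambda>q::(real \<times> real) \<times> real. indicator (A j) (snd q) * ennreal \<bar>k (snd q) (fst q) - k (z j) (fst q)\<bar>) \<in> borel_measurable (lborel \<Otimes>\<^sub>M F)"
    if "j \<le> N" for j
    by (intro borel_measurable_times_ennreal mA mD that)
  have kp: "(\<lambda>p. ennreal (k z' p)) \<in> borel_measurable lborel" for z'
    unfolding k_def measurable_lborel2 by (rule measurable_compose[OF kk_meas_p measurable_ennreal])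
  have T0m: "T0 \<in> borel_measurable lborel"
    unfolding T0_def by (rule mint[OF m0])
  have T1m: "T1 j \<in> borel_measurable lborel" if "j \<in> {1..N}" for j
    unfolding T1_def by (rule mint) (use m1 that in simp)
  have T2m: "T2 j \<in> borel_measurable lborel" for j
  proof -
    have "(\<lambda>p. ennreal (\<bar>mF j - w j\<bar> * kk \<alpha> \<beta> \<sigma> \<tau> (z j) p)) \<in> borel_measurable borel"
      by (intro measurable_compose[OF _ measurable_ennreal] borel_measurable_times kk_meas_p) simp
    then show ?thesis unfolding T2_def k_def measurable_lborel2 .
  qed
  have i0: "(\<integral>\<^sup>+p. T0 p \<partial>lborel) = emeasure F (A 0)"
  proof -
    have "(\<integral>\<^sup>+p. T0 p \<partial>lborel) = (\<integral>\<^sup>+z'. (\<integral>\<^sup>+p. indicator (A 0) z' * ennreal (k z' p) \<partial>lborel) \<partial>F)"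
      unfolding T0_def by (rule fub[OF m0])
    also have "\<dots> = (\<integral>\<^sup>+z'. indicator (A 0) z' \<partial>F)"
    proof (intro nn_integral_cong)
      fix z'
      have "(\<integral>\<^sup>+p. indicator (A 0) z' * ennreal (k z' p) \<partial>lborel) = indicator (A 0) z' * (\<integral>\<^sup>+p. ennreal (k z' p) \<partial>lborel)"
        by (rule nn_integral_cmult) (rule kp)
      then show "(\<integral>\<^sup>+p. indicator (A 0) z' * ennreal (k z' p) \<partial>lborel) = indicator (A 0) z'"
        using kk_int[OF s tau] unfolding k_def by simp
    qed
    also have "\<dots> = emeasure F (A 0)" using AF0 by simp
    finally show ?thesis .
  qed
  have i1: "(\<integral>\<^sup>+p. T1 j p \<partial>lborel) \<le> C * diam (A j) * emeasure F (A j)" if j: "j \<in> {1..N}" for j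
  proof -
    have jN: "j \<le> N" using j by simp
    have "(\<integral>\<^sup>+p. T1 j p \<partial>lborel) = (\<integral>\<^sup>+z'. (\<integral>\<^sup>+p. indicator (A j) z' * ennreal \<bar>k z' p - k (z j) p\<bar> \<partial>lborel) \<partial>F)"
      unfolding T1_def by (rule fub) (use m1[OF jN] in simp)
    also have "\<dots> \<le> (\<integral>\<^sup>+z'. C * diam (A j) * indicator (A j) z' \<partial>F)"
    proof (intro nn_integral_mono)
      fix z' :: real
      have mm: "(\<lambda>p. ennreal \<bar>k z' p - k (z j) p\<bar>) \<in> borel_measurable lborel"
        unfolding k_def measurable_lborel2
        by (intro measurable_compose[OF _ measurable_ennreal] borel_measurable_abs borel_measurable_diff kk_meas_p)
      show "(\<integral>\<^sup>+p. indicator (A j) z' * ennreal \<bar>k z' p - k (z j) p\<bar> \<partial>lborel) \<le> C * diam (A j) * indicator (A j) z'"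
      proof (cases "z' \<in> A j")
        case True
        have "(\<integral>\<^sup>+p. indicator (A j) z' * ennreal \<bar>k z' p - k (z j) p\<bar> \<partial>lborel)
            = (\<integral>\<^sup>+p. ennreal \<bar>k z' p - k (z j) p\<bar> \<partial>lborel)" using True by simp
        also have "\<dots> \<le> ennreal (\<bar>z' - z j\<bar> / \<sigma> + \<bar>\<beta>\<bar> * \<bar>z' - z j\<bar> / \<tau>)"
          unfolding k_def by (rule kk_diff[OF s tau])
        also have "\<bar>z' - z j\<bar> / \<sigma> + \<bar>\<beta>\<bar> * \<bar>z' - z j\<bar> / \<tau> = ((1 + \<bar>\<beta>\<bar> / \<gamma>) / \<sigma>) * \<bar>z' - z j\<bar>"
          using assms(1-3) by (simp add: field_simps)
        also have "ennreal (((1 + \<bar>\<beta>\<bar> / \<gamma>) / \<sigma>) * \<bar>z' - z j\<bar>) = C * ennreal \<bar>z' - z j\<bar>"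
          unfolding C_def using assms(1,2) by (intro ennreal_mult) auto
        also have "\<dots> \<le> C * diam (A j)"
        proof (intro mult_left_mono order_refl)
          show "ennreal \<bar>z' - z j\<bar> \<le> diam (A j)"
            unfolding diam_def by (rule SUP_upper2[where i="(z', z j)"]) (use True assms(11)[OF j] in auto)
        qed simp
        finally show ?thesis using True by simp
      qed simp
    qed
    also have "\<dots> = C * diam (A j) * emeasure F (A j)"
      by (rule nn_integral_cmult_indicator) (rule AF[OF jN])
    finally show ?thesis .
  qed
  have i2: "(\<integral>\<^sup>+p. T2 j p \<partial>lborel) = ennreal \<bar>mF j - w j\<bar>" for j
  proof -
    have "(\<integral>\<^sup>+p. T2 j p \<partial>lborel) = (\<integral>\<^sup>+p. ennreal \<bar>mF j - w j\<bar> * ennreal (k (z j) p) \<partial>lborel)"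
      unfolding T2_def by (intro nn_integral_cong ennreal_mult) (auto simp: k0)
    also have "\<dots> = ennreal \<bar>mF j - w j\<bar>"
      using nn_integral_cmult[OF kp[of "z j"], of "ennreal \<bar>mF j - w j\<bar>"] kk_int[OF s tau] unfolding k_def by simp
    finally show ?thesis .
  qed
  have "(\<integral>\<^sup>+ p. ennreal \<bar>eiv_density \<alpha> \<beta> \<sigma> \<tau> F p - eiv_density \<alpha> \<beta> \<sigma> \<tau> (discrete_mix N w z) p\<bar> \<partial>lborel)
      \<le> (\<integral>\<^sup>+p. T0 p + (\<Sum>j\<in>{1..N}. T1 j p + T2 j p) \<partial>lborel)"
    by (intro nn_integral_mono pt)
  also have "\<dots> = (\<integral>\<^sup>+p. T0 p \<partial>lborel) + (\<Sum>j\<in>{1..N}. (\<integral>\<^sup>+p. T1 j p \<partial>lborel) + (\<integral>\<^sup>+p. T2 j p \<partial>lborel))"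
  proof -
    have "(\<integral>\<^sup>+p. T0 p + (\<Sum>j\<in>{1..N}. T1 j p + T2 j p) \<partial>lborel)
        = (\<integral>\<^sup>+p. T0 p \<partial>lborel) + (\<integral>\<^sup>+p. (\<Sum>j\<in>{1..N}. T1 j p + T2 j p) \<partial>lborel)"
      by (rule nn_integral_add) (use T0m T1m T2m in auto)
    also have "(\<integral>\<^sup>+p. (\<Sum>j\<in>{1..N}. T1 j p + T2 j p) \<partial>lborel) = (\<Sum>j\<in>{1..N}. (\<integral>\<^sup>+p. T1 j p + T2 j p \<partial>lborel))"
      by (rule nn_integral_sum) (use T1m T2m in auto)
    also have "\<dots> = (\<Sum>j\<in>{1..N}. (\<integral>\<^sup>+p. T1 j p \<partial>lborel) + (\<integral>\<^sup>+p. T2 j p \<partial>lborel))"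
      by (intro sum.cong refl nn_integral_add) (use T1m T2m in auto)
    finally show ?thesis .
  qed
  also have "\<dots> \<le> emeasure F (A 0) + (\<Sum>j\<in>{1..N}. C * diam (A j) * emeasure F (A j) + ennreal \<bar>mF j - w j\<bar>)"
    by (intro add_mono sum_mono) (auto simp: i0 i1 i2)
  also have "\<dots> = emeasure F (A 0) + (\<Sum>j\<in>{1..N}. C * diam (A j) * emeasure F (A j)) + (\<Sum>j\<in>{1..N}. ennreal \<bar>mF j - w j\<bar>)"
    by (simp add: sum.distrib add.assoc)
  also have "(\<Sum>j\<in>{1..N}. C * diam (A j) * emeasure F (A j)) \<le> MX"
  proof -
    have "(\<Sum>j\<in>{1..N}. C * diam (A j) * emeasure F (A j)) \<le> (\<Sum>j\<in>{1..N}. MX * emeasure F (A j))"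
    proof (intro sum_mono mult_right_mono)
      fix j assume "j \<in> {1..N}"
      then show "C * diam (A j) \<le> MX" unfolding MX_def by (intro Max_ge) auto
    qed simp
    also have "\<dots> = MX * (\<Sum>j\<in>{1..N}. emeasure F (A j))" by (simp add: sum_distrib_left)
    also have "\<dots> \<le> MX * 1"
    proof (rule mult_left_mono)
      have "(\<Sum>j\<in>{1..N}. emeasure F (A j)) = emeasure F (\<Union>j\<in>{1..N}. A j)"
        by (rule sum_emeasure) (use AF assms(7) in \<open>auto intro: disjoint_family_on_mono[of _ "{0..N}"]\<close>)
      also have "\<dots> \<le> 1" by (rule F.emeasure_le_1)
      finally show "(\<Sum>j\<in>{1..N}. emeasure F (A j)) \<le> 1" .
    qed simp
    finally show ?thesis by simp
  qed
  also have "emeasure F (A 0) + MX + (\<Sum>j\<in>{1..N}. ennreal \<bar>mF j - w j\<bar>)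
      \<le> 2 * MX + ennreal ((\<Sum>j\<in>{1..N}. \<bar>measure F (A j) - w j\<bar>) + measure F (A 0))"
  proof -
    have e: "ennreal ((\<Sum>j\<in>{1..N}. \<bar>measure F (A j) - w j\<bar>) + measure F (A 0))
        = (\<Sum>j\<in>{1..N}. ennreal \<bar>mF j - w j\<bar>) + emeasure F (A 0)"
      by (simp add: mF_def ennreal_plus sum_nonneg F.emeasure_eq_measure)
    have "MX \<le> 2 * MX" by (simp add: mult_2 add_increasing2)
    then show ?thesis unfolding e by (simp add: add_mono add.commute add.left_commute)
  qed
  finally show ?thesis unfolding MX_def C_def by (simp add: add_mono)
qed

end
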